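(* Let $d$ be a separated metric on a compact Hausdorff space $X$. Then the topology symmetrically induced by $d$ coincides with the topology of $X$ if and only if $d\colon X\times X\to[0,\infty]$ is continuous with respect to the lower topology on $[0,\infty]$. Moreover, if $(X,d)$ is a separated metric compact Hausdorff space and $d$ does not attain the value $\infty$, this condition is equivalent to continuity of $d\colon X\times X\to[0,\infty[$ with respect to the Euclidean topology on $[0,\infty[$.
   Context: A metric on a set $X$ is a map $d\colon X\times X\to[0,\infty]$ with $d(x,x)=0$ and $d(x,z)\le d(x,y)+d(y,z)$ (not necessarily symmetric, $\infty$ allowed); separated means $d(x,y)=0=d(y,x)$ implies $x=y$. The topology symmetrically induced by $d$ is the topology generated by the sets $\{x\mid d(x_0,x)<u\}$ and $\{x\mid d(x,x_0)<u\}$ for $x_0\in X$, $u\in[0,\infty]$. The lower topology on $[0,\infty]$ is generated by the sets $[0,u[$, and the upper topology by the sets $]u,\infty]$ ($u\in[0,\infty]$). A separated metric compact Hausdorff space is a compact Hausdorff space $X$ with a separated metric $d$ continuous as a map $X\times X\to[0,\infty]$ for the upper topology. *)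

theory Defs
  imports "HOL-Analysis.Analysis" "HOL-Library.Extended_Nonnegative_Real"
begin

text \<open>A (not necessarily symmetric, possibly infinite-valued) metric on the carrier of X,
  with values in [0,\<infinity>] modelled by ennreal.\<close>
definition is_metric_on :: "'a set \<Rightarrow> ('a \<Rightarrow> 'a \<Rightarrow> ennreal) \<Rightarrow> bool" where
  "is_metric_on X d \<longleftrightarrow>
     (\<forall>x\<in>X. d x x = 0) \<and> (\<forall>x\<in>X. \<forall>y\<in>X. \<forall>z\<in>X. d x z \<le> d x y + d y z)"

definition separated_metric_on :: "'a set \<Rightarrow> ('a \<Rightarrow> 'a \<Rightarrow> ennreal) \<Rightarrow> bool" where
  "separated_metric_on X d \<longleftrightarrow> is_metric_on X d \<and>
     (\<forall>x\<in>X. \<forall>y\<in>X. d x y = 0 \<and> d y x = 0 \<longrightarrow> x = y)"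

text \<open>The topology on the carrier of X symmetrically induced by d: generated by the sets
  {x | d x0 x < u} and {x | d x x0 < u}, x0 in X, u in [0,\<infinity>] (the whole space is
  included explicitly, as it is open in any topology).\<close>
definition sym_induced_topology :: "'a topology \<Rightarrow> ('a \<Rightarrow> 'a \<Rightarrow> ennreal) \<Rightarrow> 'a topology" where
  "sym_induced_topology T d = topology_generated_by
     (insert (topspace T)
       ({{x \<in> topspace T. d x0 x < u} | x0 u. x0 \<in> topspace T} \<union>
        {{x \<in> topspace T. d x x0 < u} | x0 u. x0 \<in> topspace T}))"

definition lower_topology :: "ennreal topology" where
  "lower_topology = topology_generated_by (insert UNIV (range lessThan))"

definition upper_topology :: "ennreal topology" where
  "upper_topology = topology_generated_by (insert UNIV (range greaterThan))"

definition sep_metric_compact_Hausdorff :: "'a topology \<Rightarrow> ('a \<Rightarrow> 'a \<Rightarrow> ennreal) \<Rightarrow> bool" where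
  "sep_metric_compact_Hausdorff T d \<longleftrightarrow>
     compact_space T \<and> Hausdorff_space T \<and> separated_metric_on (topspace T) d \<and>
     continuous_map (prod_topology T T) upper_topology (\<lambda>(x, y). d x y)"

end

theory Submission imports Defs begin

lemma lower_cont_iff:
  "continuous_map X lower_topology f \<longleftrightarrow> (\<forall>u. openin X {x\<in>topspace X. f x < u})"
proof -
  have e: "f -` {..<u} \<inter> topspace X = {x\<in>topspace X. f x < u}" for u by auto
  have e2: "f -` UNIV \<inter> topspace X = topspace X" by auto
  show ?thesis unfolding lower_topology_def continuous_on_generated_topo_iff
    by (auto simp: e e2) (metis e rangeI)
qed

lemma upper_cont_iff:
  "continuous_map X upper_topology f \<longleftrightarrow> (\<forall>u. openin X {x\<in>topspace X. f x > u})"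
proof -
  have e: "f -` {u<..} \<inter> topspace X = {x\<in>topspace X. f x > u}" for u by auto
  have e2: "f -` UNIV \<inter> topspace X = topspace X" by auto
  show ?thesis unfolding upper_topology_def continuous_on_generated_topo_iff
    by (auto simp: e e2) (metis e rangeI)
qed

lemma ex_eps:
  fixes a u :: ennreal
  assumes "a < u" shows "\<exists>e>0. a + e + e < u"
proof (cases u rule: ennreal_cases)
  case (real b)
  have "a \<noteq> \<infinity>" using assms by auto
  then obtain c where a: "a = ennreal c" "c \<ge> 0" by (cases a rule: ennreal_cases) auto
  with assms real have "c < b" by (simp add: ennreal_less_iff)
  show ?thesis
    apply (rule exI[of _ "ennreal ((b - c)/3)"])
    using a real \<open>c < b\<close> apply (simp add: ennreal_plus[symmetric] ennreal_less_iff del: ennreal_plus)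
    by (simp add: field_simps)
next
  case top
  then have "a \<noteq> \<infinity>" using assms by auto
  then show ?thesis using top by (intro exI[of _ 1]) (auto simp: less_top[symmetric])
qed

lemma sym_topspace[simp]: "topspace (sym_induced_topology T d) = topspace T"
  unfolding sym_induced_topology_def by auto

lemma sym_open1: "x0 \<in> topspace T \<Longrightarrow> openin (sym_induced_topology T d) {x \<in> topspace T. d x0 x < u}"
  unfolding sym_induced_topology_def by (rule topology_generated_by_Basis) blast

lemma sym_open2: "x0 \<in> topspace T \<Longrightarrow> openin (sym_induced_topology T d) {x \<in> topspace T. d x x0 < u}"
  unfolding sym_induced_topology_def by (rule topology_generated_by_Basis) blast

lemma part1:
  assumes C: "compact_space T" and H: "Hausdorff_space T" and M: "separated_metric_on (topspace T) d"
  shows "sym_induced_topology T d = T \<longleftrightarrow> continuous_map (prod_topology T T) lower_topology (\<lambda>(x,y). d x y)"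
proof -
  have refl: "\<And>x. x \<in> topspace T \<Longrightarrow> d x x = 0" and tri: "\<And>x y z. x \<in> topspace T \<Longrightarrow> y \<in> topspace T \<Longrightarrow> z \<in> topspace T \<Longrightarrow> d x z \<le> d x y + d y z"
    and sep: "\<And>x y. x \<in> topspace T \<Longrightarrow> y \<in> topspace T \<Longrightarrow> d x y = 0 \<Longrightarrow> d y x = 0 \<Longrightarrow> x = y"
    using M unfolding separated_metric_on_def is_metric_on_def by blast+
  let ?S = "sym_induced_topology T d"
  show ?thesis
  proof
    assume ST: "?S = T"
    show "continuous_map (prod_topology T T) lower_topology (\<lambda>(x,y). d x y)"
      unfolding lower_cont_iff
    proof (intro allI, subst openin_prod_topology_alt, intro allI impI)
      fix u x y assume xy: "(x,y) \<in> {p \<in> topspace (prod_topology T T). (case p of (x, y) \<Rightarrow> d x y) < u}"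
      then have x: "x \<in> topspace T" and y: "y \<in> topspace T" and lt: "d x y < u" by auto
      obtain e where e: "e > 0" "d x y + e + e < u" using ex_eps[OF lt] by blast
      define U where "U = {z \<in> topspace T. d z x < e}"
      define V where "V = {z \<in> topspace T. d y z < e}"
      have "openin T U" unfolding U_def using sym_open2[OF x, where d=d] ST by simp
      moreover have "openin T V" unfolding V_def using sym_open1[OF y, where d=d] ST by simp
      moreover have "x \<in> U" "y \<in> V" unfolding U_def V_def using x y e refl by auto
      moreover have "U \<times> V \<subseteq> {p \<in> topspace (prod_topology T T). (case p of (x, y) \<Rightarrow> d x y) < u}"
      proof
        fix p assume "p \<in> U \<times> V"
        then obtain a b where p: "p = (a,b)" and a: "a \<in> U" and b: "b \<in> V" by blast
        then have at: "a \<in> topspace T" and bt: "b \<in> topspace T" unfolding U_def V_def by auto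
        have "d a b \<le> d a x + d x b" using tri[OF at x bt] .
        also have "\<dots> \<le> d a x + (d x y + d y b)" using tri[OF x y bt] by (simp add: add_left_mono)
        also have "\<dots> \<le> e + (d x y + e)" using a b unfolding U_def V_def
          by (intro add_mono) (auto intro: less_imp_le)
        also have "\<dots> = d x y + e + e" by (simp add: ac_simps)
        also have "\<dots> < u" by (rule e(2))
        finally show "p \<in> {p \<in> topspace (prod_topology T T). (case p of (x, y) \<Rightarrow> d x y) < u}"
          using at bt p by simp
      qed
      ultimately show "\<exists>U V. openin T U \<and> openin T V \<and> x \<in> U \<and> y \<in> V \<and>
          U \<times> V \<subseteq> {p \<in> topspace (prod_topology T T). (case p of (x, y) \<Rightarrow> d x y) < u}" by blast
    qed
  next
    assume LC: "continuous_map (prod_topology T T) lower_topology (\<lambda>(x,y). d x y)"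
    have W: "openin (prod_topology T T) {p \<in> topspace (prod_topology T T). (case p of (x, y) \<Rightarrow> d x y) < u}" for u
      using LC unfolding lower_cont_iff by blast
    have g1: "openin T {x \<in> topspace T. d x0 x < u}" if x0: "x0 \<in> topspace T" for x0 u
    proof -
      have c: "continuous_map T (prod_topology T T) (\<lambda>x. (x0, x))"
        using x0 by (intro continuous_map_pairedI) auto
      from openin_continuous_map_preimage[OF c W[of u]] show ?thesis using x0 by (simp cong: conj_cong)
    qed
    have g2: "openin T {x \<in> topspace T. d x x0 < u}" if x0: "x0 \<in> topspace T" for x0 u
    proof -
      have c: "continuous_map T (prod_topology T T) (\<lambda>x. (x, x0))"
        using x0 by (intro continuous_map_pairedI) auto
      from openin_continuous_map_preimage[OF c W[of u]] show ?thesis using x0 by (simp cong: conj_cong)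
    qed
    have fin: "openin T U" if "openin ?S U" for U
    proof -
      have gen: "generate_topology_on (insert (topspace T)
       ({{x \<in> topspace T. d x0 x < u} | x0 u. x0 \<in> topspace T} \<union>
        {{x \<in> topspace T. d x x0 < u} | x0 u. x0 \<in> topspace T})) U"
        using that unfolding sym_induced_topology_def openin_topology_generated_by_iff .
      show ?thesis
        by (rule generate_topology_on_coarsest[of "openin T", OF istopology_openin _ gen]) (auto intro: g1 g2)
    qed
    have sepU: "\<exists>U V. openin ?S U \<and> openin ?S V \<and> a \<in> U \<and> b \<in> V \<and> disjnt U V"
      if a: "a \<in> topspace T" and b: "b \<in> topspace T" and pos: "d a b \<noteq> 0" for a b
    proof -
      obtain e where e: "e > 0" "0 + e + e < d a b" using ex_eps[of 0 "d a b"] pos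
        by (auto simp: zero_less_iff_neq_zero)
      define U where "U = {z \<in> topspace T. d a z < e}"
      define V where "V = {z \<in> topspace T. d z b < e}"
      have "disjnt U V"
      proof (rule ccontr)
        assume "\<not> disjnt U V"
        then obtain z where z: "z \<in> U" "z \<in> V" unfolding disjnt_def by blast
        then have zt: "z \<in> topspace T" unfolding U_def by auto
        have "d a b \<le> d a z + d z b" by (rule tri[OF a zt b])
        also have "\<dots> \<le> e + e" using z unfolding U_def V_def by (intro add_mono) (auto intro: less_imp_le)
        finally show False using e by simp
      qed
      moreover have "a \<in> U" "b \<in> V" unfolding U_def V_def using a b e refl by auto
      ultimately show ?thesis unfolding U_def V_def using sym_open1[OF a] sym_open2[OF b] by blast
    qed
    have "Hausdorff_space ?S"
      unfolding Hausdorff_space_def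
    proof (intro allI impI)
      fix x y assume "x \<in> topspace ?S \<and> y \<in> topspace ?S \<and> x \<noteq> y"
      then have x: "x \<in> topspace T" and y: "y \<in> topspace T" and ne: "x \<noteq> y" by auto
      show "\<exists>U V. openin ?S U \<and> openin ?S V \<and> x \<in> U \<and> y \<in> V \<and> disjnt U V"
      proof (cases "d x y = 0")
        case False then show ?thesis using sepU[OF x y] by blast
      next
        case True
        then have "d y x \<noteq> 0" using sep[OF x y] ne by blast
        then obtain U V where "openin ?S U" "openin ?S V" "y \<in> U" "x \<in> V" "disjnt U V"
          using sepU[OF y x] by blast
        then show ?thesis by (metis disjnt_sym)
      qed
    qed
    then show "?S = T"
      by (intro compact_Hausdorff_space_optimal[of T ?S, symmetric]) (auto intro: fin C)
  qed
qed

lemma h1: "(x::ennreal) \<noteq> \<infinity> \<Longrightarrow> 0 \<le> a \<Longrightarrow> (a < enn2real x) \<longleftrightarrow> (ennreal a < x)"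
  by (cases x rule: ennreal_cases) (auto simp: ennreal_less_iff)

lemma h2: "(x::ennreal) \<noteq> \<infinity> \<Longrightarrow> (enn2real x < b) \<longleftrightarrow> (x < ennreal b)"
  by (cases x rule: ennreal_cases) (auto simp: ennreal_less_iff ennreal_lessI)

lemma part2:
  assumes SM: "sep_metric_compact_Hausdorff T d" and F: "\<forall>x\<in>topspace T. \<forall>y\<in>topspace T. d x y \<noteq> \<infinity>"
  shows "continuous_map (prod_topology T T) lower_topology (\<lambda>(x, y). d x y) \<longleftrightarrow>
            continuous_map (prod_topology T T) (subtopology euclideanreal {0..})
              (\<lambda>(x, y). enn2real (d x y))"
proof -
  let ?P = "prod_topology T T"
  define f where "f = (\<lambda>p. case p of (x, y) \<Rightarrow> d x y)"
  have fin: "p \<in> topspace ?P \<Longrightarrow> f p \<noteq> \<infinity>" for p using F unfolding f_def by auto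
  have UP: "openin ?P {p \<in> topspace ?P. u < f p}" for u
    using SM unfolding sep_metric_compact_Hausdorff_def upper_cont_iff f_def by blast
  have eq1: "(\<lambda>(x, y). enn2real (d x y)) = (\<lambda>p. enn2real (f p))" unfolding f_def by auto
  have gt: "openin ?P {p \<in> topspace ?P. a < enn2real (f p)}" for a
  proof (cases "a \<ge> 0")
    case True
    have "{p \<in> topspace ?P. a < enn2real (f p)} = {p \<in> topspace ?P. ennreal a < f p}"
      using h1[OF fin True] by blast
    then show ?thesis using UP by simp
  next
    case False
    have "a < enn2real x" for x using False by (meson enn2real_nonneg less_le_trans not_le)
    then have "{p \<in> topspace ?P. a < enn2real (f p)} = topspace ?P"
      by blast
    then show ?thesis by (metis openin_topspace)
  qed
  have "continuous_map ?P lower_topology f \<longleftrightarrow> (\<forall>u. openin ?P {p \<in> topspace ?P. f p < u})"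
    by (rule lower_cont_iff)
  also have "\<dots> \<longleftrightarrow> (\<forall>b. openin ?P {p \<in> topspace ?P. enn2real (f p) < b})"
  proof
    assume L: "\<forall>u. openin ?P {p \<in> topspace ?P. f p < u}"
    show "\<forall>b. openin ?P {p \<in> topspace ?P. enn2real (f p) < b}"
    proof
      fix b
      have "{p \<in> topspace ?P. enn2real (f p) < b} = {p \<in> topspace ?P. f p < ennreal b}"
        using h2[OF fin] by blast
      then show "openin ?P {p \<in> topspace ?P. enn2real (f p) < b}" using L by simp
    qed
  next
    assume R: "\<forall>b. openin ?P {p \<in> topspace ?P. enn2real (f p) < b}"
    show "\<forall>u. openin ?P {p \<in> topspace ?P. f p < u}"
    proof
      fix u :: ennreal
      show "openin ?P {p \<in> topspace ?P. f p < u}"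
      proof (cases u rule: ennreal_cases)
        case (real b)
        have "{p \<in> topspace ?P. enn2real (f p) < b} = {p \<in> topspace ?P. f p < u}"
          using h2[OF fin] real by blast
        then show ?thesis using R by metis
      next
        case top
        then have "{p \<in> topspace ?P. f p < u} = topspace ?P" using fin by (auto simp: less_top)
        then show ?thesis by (metis openin_topspace)
      qed
    qed
  qed
  also have "\<dots> \<longleftrightarrow> continuous_map ?P (subtopology euclideanreal {0..}) (\<lambda>p. enn2real (f p))"
    unfolding continuous_map_upper_lower_semicontinuous_lt_gen using gt by auto
  finally show ?thesis unfolding f_def by (simp add: case_prod_unfold)
qed

theorem proposition2p10:
  fixes T :: "'a topology" and d :: "'a \<Rightarrow> 'a \<Rightarrow> ennreal"
  shows "(compact_space T \<and> Hausdorff_space T \<and> separated_metric_on (topspace T) d \<longrightarrow>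
           (sym_induced_topology T d = T \<longleftrightarrow>
            continuous_map (prod_topology T T) lower_topology (\<lambda>(x, y). d x y)))
       \<and> (sep_metric_compact_Hausdorff T d \<and> (\<forall>x\<in>topspace T. \<forall>y\<in>topspace T. d x y \<noteq> \<infinity>) \<longrightarrow>
           (continuous_map (prod_topology T T) lower_topology (\<lambda>(x, y). d x y) \<longleftrightarrow>
            continuous_map (prod_topology T T) (subtopology euclideanreal {0..})
              (\<lambda>(x, y). enn2real (d x y))))"
  using part1 part2 by blast
end
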